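(* Let $a>0$, $\alpha\in[0,1)$, $f\in\mathcal C_a$ and $g=\mathrm{Sh}_\alpha(f)$. Then $g\in\mathcal P$, $g$ is differentiable on $(a_g,b_g)$ with $g'(x)<\alpha$ for all $x\in(a_g,b_g)$, and $\mathrm{gr}(g)$ is stable under the shaking $\mathrm{Sh}_\alpha$, i.e. $\mathrm{Sh}_\alpha(\mathrm{gr}(g))=\mathrm{gr}(g)$.
   Context: $\mathcal C_a$ is the set of $C^1$ functions $f:\mathbb R\to\mathbb R$ that are even, satisfy $f(s)=|s|$ for $|s|\ge a$ and are strictly convex on $[-a,a]$. For $f\in\mathcal C_a$: $F_\alpha(s)=f(s)-\alpha s$, $x_\alpha^+=(f')^{-1}(\alpha)\in[0,a)$ (inverse of $f':[-a,a]\to[-1,1]$); let $F_\alpha^{-1}$ be the inverse of $F_\alpha|_{[x_\alpha^+,\infty)}$, $\phi=F_\alpha^{-1}\circ F_\alpha$, $\delta_x=(1-\alpha)^{-1}F_\alpha(x)-\phi(x)$, $s_\alpha=x_\alpha^++\delta_{x_\alpha^+}$; $x\mapsto x+\delta_x$ is an increasing bijection $(-\infty,x_\alpha^+]\to(-\infty,s_\alpha]$ with inverse $\tau$. Define $\mathrm{Sh}_\alpha(f)(x)=\alpha x+F_\alpha(\tau(x))$ for $x\le s_\alpha$ and $=x$ for $x>s_\alpha$. $\mathcal P$ is the set of continuous $g:\mathbb R\to\mathbb R$ with $g(x)\ge|x|$ for all $x$, $g(x)=|x|$ for $|x|$ large, and $g(x_0)\ne|x_0|$ for some $x_0$; for $g\in\mathcal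 P$, $a_g=\inf\{x:g(x)\ne|x|\}$, $b_g=\sup\{x:g(x)\ne|x|\}$, $\mathrm{gr}(g)=\{(x,y)\in[a_g,b_g]\times\mathbb R_{\ge0}:|x|\le y\le g(x)\}$. Shaking of sets: $D$ is the line $y=-x$, $v_\alpha$ the unit vector positively collinear to $(1,\alpha)$; for compact $K\subseteq\mathbb R^2$, $\mathrm{Sh}_\alpha(K)=\bigcup_{p\in D}K^p$ with $K^p=\emptyset$ if $K\cap(p+\mathbb Rv_\alpha)=\emptyset$ and otherwise the segment from $p$ to $p+|K\cap(p+\mathbb Rv_\alpha)|\,v_\alpha$ ($|\cdot|$ one-dimensional Lebesgue measure). *)

theory Defs
  imports "HOL-Analysis.Analysis"
begin

definition strictly_convex_on :: "real set \<Rightarrow> (real \<Rightarrow> real) \<Rightarrow> bool" where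
  "strictly_convex_on S f \<longleftrightarrow> convex S \<and>
     (\<forall>x\<in>S. \<forall>y\<in>S. \<forall>t. x \<noteq> y \<and> 0 < t \<and> t < 1 \<longrightarrow>
        f ((1 - t) * x + t * y) < (1 - t) * f x + t * f y)"

definition class_C :: "real \<Rightarrow> (real \<Rightarrow> real) set" where
  "class_C a = {f. f C1_differentiable_on UNIV \<and> (\<forall>s. f (-s) = f s)
      \<and> (\<forall>s. \<bar>s\<bar> \<ge> a \<longrightarrow> f s = \<bar>s\<bar>) \<and> strictly_convex_on {-a..a} f}"

definition Fa :: "(real \<Rightarrow> real) \<Rightarrow> real \<Rightarrow> real \<Rightarrow> real" where
  "Fa f \<alpha> s = f s - \<alpha> * s"

definition xplus :: "real \<Rightarrow> (real \<Rightarrow> real) \<Rightarrow> real \<Rightarrow> real" where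
  "xplus a f \<alpha> = (THE x. x \<in> {-a..a} \<and> deriv f x = \<alpha>)"

definition Fa_inv :: "real \<Rightarrow> (real \<Rightarrow> real) \<Rightarrow> real \<Rightarrow> real \<Rightarrow> real" where
  "Fa_inv a f \<alpha> y = (THE s. s \<ge> xplus a f \<alpha> \<and> Fa f \<alpha> s = y)"

definition phi :: "real \<Rightarrow> (real \<Rightarrow> real) \<Rightarrow> real \<Rightarrow> real \<Rightarrow> real" where
  "phi a f \<alpha> x = Fa_inv a f \<alpha> (Fa f \<alpha> x)"

definition delta :: "real \<Rightarrow> (real \<Rightarrow> real) \<Rightarrow> real \<Rightarrow> real \<Rightarrow> real" where
  "delta a f \<alpha> x = Fa f \<alpha> x / (1 - \<alpha>) - phi a f \<alpha> x"

definition s_alpha :: "real \<Rightarrow> (real \<Rightarrow> real) \<Rightarrow> real \<Rightarrow> real" where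
  "s_alpha a f \<alpha> = xplus a f \<alpha> + delta a f \<alpha> (xplus a f \<alpha>)"

text \<open>tau: inverse of x \<mapsto> x + delta_x, from (-inf, x^+] onto (-inf, s_alpha].\<close>
definition tau :: "real \<Rightarrow> (real \<Rightarrow> real) \<Rightarrow> real \<Rightarrow> real \<Rightarrow> real" where
  "tau a f \<alpha> y = (THE x. x \<le> xplus a f \<alpha> \<and> x + delta a f \<alpha> x = y)"

definition shake_fun :: "real \<Rightarrow> real \<Rightarrow> (real \<Rightarrow> real) \<Rightarrow> real \<Rightarrow> real" where
  "shake_fun a \<alpha> f x =
     (if x \<le> s_alpha a f \<alpha> then \<alpha> * x + Fa f \<alpha> (tau a f \<alpha> x) else x)"

definition class_P :: "(real \<Rightarrow> real) set" where
  "class_P = {g. continuous_on UNIV g \<and> (\<forall>x. g x \<ge> \<bar>x\<bar>)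
      \<and> (\<exists>R. \<forall>x. \<bar>x\<bar> \<ge> R \<longrightarrow> g x = \<bar>x\<bar>) \<and> (\<exists>x0. g x0 \<noteq> \<bar>x0\<bar>)}"

definition a_of :: "(real \<Rightarrow> real) \<Rightarrow> real" where
  "a_of g = Inf {x. g x \<noteq> \<bar>x\<bar>}"

definition b_of :: "(real \<Rightarrow> real) \<Rightarrow> real" where
  "b_of g = Sup {x. g x \<noteq> \<bar>x\<bar>}"

definition gr :: "(real \<Rightarrow> real) \<Rightarrow> (real \<times> real) set" where
  "gr g = {(x, y). a_of g \<le> x \<and> x \<le> b_of g \<and> 0 \<le> y \<and> \<bar>x\<bar> \<le> y \<and> y \<le> g x}"

definition lineD :: "(real \<times> real) set" where
  "lineD = {(t, -t) | t. True}"

definition v_dir :: "real \<Rightarrow> real \<times> real" where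
  "v_dir \<alpha> = (1 / norm ((1::real), \<alpha>)) *\<^sub>R (1, \<alpha>)"

definition chord :: "real \<Rightarrow> (real \<times> real) set \<Rightarrow> real \<times> real \<Rightarrow> (real \<times> real) set" where
  "chord \<alpha> K p =
     (if K \<inter> {p + t *\<^sub>R v_dir \<alpha> | t. True} = {} then {}
      else closed_segment p (p + measure lborel {t::real. p + t *\<^sub>R v_dir \<alpha> \<in> K} *\<^sub>R v_dir \<alpha>))"

definition shake_set :: "real \<Rightarrow> (real \<times> real) set \<Rightarrow> (real \<times> real) set" where
  "shake_set \<alpha> K = (\<Union>p\<in>lineD. chord \<alpha> K p)"

end

theory Submission
  imports Defs
begin

locale shk =
  fixes a \<alpha> :: real and f :: "real \<Rightarrow> real"
  assumes a_pos: "a > 0" and al0: "0 \<le> \<alpha>" and al1: "\<alpha> < 1" and fC: "f \<in> class_C a"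
begin

definition "f' = deriv f"

lemma fd: "(f has_real_derivative f' x) (at x)"
  and f'_cont: "continuous_on UNIV f'"
proof -
  from fC obtain D where D: "\<forall>x\<in>UNIV. (f has_vector_derivative D x) (at x)" "continuous_on UNIV D"
    unfolding class_C_def C1_differentiable_on_def by auto
  have dd: "(f has_real_derivative D x) (at x)" for x
    using D(1) has_real_derivative_iff_has_vector_derivative by blast
  have "f' = D" unfolding f'_def using dd DERIV_imp_deriv by blast
  then show "(f has_real_derivative f' x) (at x)" "continuous_on UNIV f'" using dd D(2) by auto
qed

lemma f_out: "\<bar>s\<bar> \<ge> a \<Longrightarrow> f s = \<bar>s\<bar>"
  using fC unfolding class_C_def by auto

lemma f_sc: "strictly_convex_on {-a..a} f"
  using fC unfolding class_C_def by auto

lemma isCont_f': "isCont f' x"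
  using f'_cont by (simp add: continuous_on_eq_continuous_at)

lemma f'_right: "x > a \<Longrightarrow> f' x = 1"
proof -
  assume x: "x > a"
  have "((\<lambda>s. s) has_real_derivative 1) (at x)" by (rule DERIV_ident)
  then have "(f has_real_derivative 1) (at x)"
    by (rule has_field_derivative_transform_within_open[where S="{a<..}"]) (use x a_pos f_out in auto)
  then show ?thesis using fd DERIV_unique by blast
qed

lemma f'_left: "x < -a \<Longrightarrow> f' x = -1"
proof -
  assume x: "x < -a"
  have "((\<lambda>s. -s) has_real_derivative -1) (at x)" using DERIV_ident DERIV_minus by fastforce
  then have "(f has_real_derivative -1) (at x)"
    by (rule has_field_derivative_transform_within_open[where S="{..< -a}"]) (use x a_pos f_out in auto)
  then show ?thesis using fd DERIV_unique by blast
qed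

lemma f'_a: "f' a = 1"
proof -
  have "(f' \<longlongrightarrow> f' a) (at_right a)" using isCont_f' 
    by (simp add: isCont_def filterlim_at_split)
  moreover have "eventually (\<lambda>x. f' x = 1) (at_right a)"
    using eventually_at_right_less[of a] by eventually_elim (simp add: f'_right)
  ultimately have "((\<lambda>_. 1) \<longlongrightarrow> f' a) (at_right a)" by (rule Lim_transform_eventually)
  then show ?thesis by (simp add: tendsto_const_iff)
qed

lemma f'_ma: "f' (-a) = -1"
proof -
  have "(f' \<longlongrightarrow> f' (-a)) (at_left (-a))" using isCont_f' 
    by (simp add: isCont_def filterlim_at_split)
  moreover have "eventually (\<lambda>x. f' x = -1) (at_left (-a))"
    using eventually_at_left_real[of "-a-1" "-a"] by (rule eventually_mono) (auto simp add: f'_left)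
  ultimately have "((\<lambda>_. -1) \<longlongrightarrow> f' (-a)) (at_left (-a))" by (rule Lim_transform_eventually)
  then show ?thesis by (simp add: tendsto_const_iff)
qed

lemma f'_le: "x \<le> -a \<Longrightarrow> f' x = -1" using f'_left f'_ma by force
lemma f'_ge: "x \<ge> a \<Longrightarrow> f' x = 1" using f'_right f'_a by force

lemma strict_tangent:
  assumes c: "-a < c" "c < a" and x: "-a \<le> x" "x \<le> a" "x \<noteq> c"
  shows "f x - f c > f' c * (x - c)"
proof -
  have sc: "convex_on {-a..a} f"
  proof (intro convex_onI)
    fix t x y :: real assume h: "0 < t" "t < 1" "x \<in> {-a..a}" "y \<in> {-a..a}"
    show "f ((1 - t) *\<^sub>R x + t *\<^sub>R y) \<le> (1 - t) * f x + t * f y"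
    proof (cases "x = y")
      case True then show ?thesis by (simp add: algebra_simps)
    next
      case False
      then have "f ((1 - t) * x + t * y) < (1 - t) * f x + t * f y"
        using f_sc h unfolding strictly_convex_on_def by blast
      then show ?thesis by simp
    qed
  qed simp
  have tan: "f y - f c \<ge> f' c * (y - c)" if "-a \<le> y" "y \<le> a" for y
    by (rule convex_on_imp_above_tangent[OF sc]) (use c that fd in \<open>auto intro: has_field_derivative_at_within\<close>)
  define m where "m = (1 - 1/2) * x + (1/2) * c"
  have "f m < (1 - 1/2) * f x + (1/2) * f c"
  proof -
    have "\<forall>t. x \<noteq> c \<and> 0 < t \<and> t < 1 \<longrightarrow> f ((1 - t) * x + t * c) < (1 - t) * f x + t * f c"
      using f_sc c x unfolding strictly_convex_on_def by auto
    from spec[OF this, of "1/2"] show ?thesis using x(3) unfolding m_def by simp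
  qed
  moreover have "f m - f c \<ge> f' c * (m - c)" using tan[of m] c x by (simp add: m_def)
  ultimately show ?thesis by (simp add: m_def algebra_simps)
qed

lemma f'_strict_int: "-a < c \<Longrightarrow> c < d \<Longrightarrow> d < a \<Longrightarrow> f' c < f' d"
proof -
  assume h: "-a < c" "c < d" "d < a"
  have "f d - f c > f' c * (d - c)" using strict_tangent[of c d] h by auto
  moreover have "f c - f d > f' d * (c - d)" using strict_tangent[of d c] h by auto
  ultimately have "(f' d - f' c) * (d - c) > 0" by (simp add: algebra_simps)
  then show ?thesis using h by (simp add: zero_less_mult_iff)
qed

lemma f'_le_int: "-a \<le> x \<Longrightarrow> x < m \<Longrightarrow> m < a \<Longrightarrow> f' x \<le> f' m"
proof (cases "x = -a")
  case True
  assume h: "-a \<le> x" "x < m" "m < a"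
  have "(f' \<longlongrightarrow> f' x) (at_right x)" using isCont_f' 
    by (simp add: isCont_def filterlim_at_split)
  moreover have "eventually (\<lambda>z. f' z \<le> f' m) (at_right x)"
    using eventually_at_right[of x m] h True by (auto elim!: eventually_mono intro: less_imp_le f'_strict_int)
  ultimately show ?thesis by (rule tendsto_upperbound) simp
next
  case False
  assume h: "-a \<le> x" "x < m" "m < a"
  then show ?thesis using f'_strict_int[of x m] False by auto
qed

lemma f'_ge_int: "-a < m \<Longrightarrow> m < y \<Longrightarrow> y \<le> a \<Longrightarrow> f' m \<le> f' y"
proof (cases "y = a")
  case True
  assume h: "-a < m" "m < y" "y \<le> a"
  have "(f' \<longlongrightarrow> f' y) (at_left y)" using isCont_f' 
    by (simp add: isCont_def filterlim_at_split)
  moreover have "eventually (\<lambda>z. f' m \<le> f' z) (at_left y)"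
    using eventually_at_left[of m y] h True by (auto elim!: eventually_mono intro: less_imp_le f'_strict_int)
  ultimately show ?thesis by (rule tendsto_lowerbound) simp
next
  case False
  assume h: "-a < m" "m < y" "y \<le> a"
  then show ?thesis using f'_strict_int[of m y] False by auto
qed

lemma f'_strict: "-a \<le> x \<Longrightarrow> x < y \<Longrightarrow> y \<le> a \<Longrightarrow> f' x < f' y"
proof -
  assume h: "-a \<le> x" "x < y" "y \<le> a"
  define m1 where "m1 = (2 * x + y) / 3"
  define m2 where "m2 = (x + 2 * y) / 3"
  have "f' x \<le> f' m1" using h by (intro f'_le_int) (auto simp: m1_def)
  also have "\<dots> < f' m2" using h by (intro f'_strict_int) (auto simp: m1_def m2_def)
  also have "\<dots> \<le> f' y" using h by (intro f'_ge_int) (auto simp: m2_def)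
  finally show ?thesis .
qed

lemma f'_lt1: "x < a \<Longrightarrow> f' x < 1"
  using f'_le[of x] f'_strict[of x a] f'_a a_pos by (cases "x \<le> -a") auto
lemma f'_gtm1: "x > -a \<Longrightarrow> f' x > -1"
  using f'_ge[of x] f'_strict[of "-a" x] f'_ma a_pos by (cases "x \<ge> a") auto
lemma f'_bounds: "-1 \<le> f' x \<and> f' x \<le> 1"
  using f'_lt1[of x] f'_gtm1[of x] f'_le[of x] f'_ge[of x] by (cases "x < a"; cases "x > -a") auto

abbreviation "F \<equiv> Fa f \<alpha>"

lemma F_eq: "F = (\<lambda>s. f s - \<alpha> * s)" by (rule ext) (simp add: Fa_def)

lemma Fd: "(F has_real_derivative (f' x - \<alpha>)) (at x)"
  unfolding F_eq by (auto intro!: derivative_eq_intros fd)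

lemma isCont_F: "isCont F x" using Fd DERIV_isCont by blast
lemma cont_F: "continuous_on S F" by (simp add: continuous_at_imp_continuous_on isCont_F)
lemma isCont_f: "isCont f x" using fd DERIV_isCont by blast

lemma F_right: "s \<ge> a \<Longrightarrow> F s = (1 - \<alpha>) * s"
  using f_out[of s] a_pos by (simp add: Fa_def algebra_simps)
lemma F_left: "s \<le> -a \<Longrightarrow> F s = -(1 + \<alpha>) * s"
  using f_out[of s] a_pos by (simp add: Fa_def algebra_simps)

lemma xp_ex: "\<exists>!x. x \<in> {-a..a} \<and> f' x = \<alpha>"
proof -
  have c: "continuous_on {-a..a} f'" by (rule continuous_on_subset[OF f'_cont]) simp
  have "\<exists>x. -a \<le> x \<and> x \<le> a \<and> f' x = \<alpha>"
    using IVT'[of f' "-a" \<alpha> a, OF _ _ _ c] f'_ma f'_a al0 al1 a_pos by auto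
  moreover have "x = y" if "x \<in> {-a..a}" "f' x = \<alpha>" "y \<in> {-a..a}" "f' y = \<alpha>" for x y
  proof -
    have "\<not> x < y" using f'_strict[of x y] that by auto
    moreover have "\<not> y < x" using f'_strict[of y x] that by auto
    ultimately show ?thesis by linarith
  qed
  ultimately show ?thesis by (metis atLeastAtMost_iff)
qed

definition "xp = xplus a f \<alpha>"

lemma xp_prop: "xp \<in> {-a..a} \<and> f' xp = \<alpha>"
  unfolding xp_def xplus_def f'_def[symmetric] using theI'[OF xp_ex] .

lemma xp_int: "-a < xp" "xp < a" "f' xp = \<alpha>"
  using xp_prop f'_ma f'_a al0 al1 by (auto simp: less_le)

lemma f'_lt_al: "x < xp \<Longrightarrow> f' x < \<alpha>"
  using f'_le[of x] f'_strict[of x xp] xp_int al0 by (cases "x \<le> -a") auto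
lemma f'_gt_al: "x > xp \<Longrightarrow> f' x > \<alpha>"
  using f'_ge[of x] f'_strict[of xp x] xp_int al1 by (cases "x \<ge> a") auto

lemma F_dec: assumes "x < y" "y \<le> xp" shows "F y < F x"
proof (rule DERIV_neg_imp_decreasing_open[of x y F])
  fix z assume "x < z" "z < y" then show "\<exists>d. DERIV F z :> d \<and> d < 0"
    using Fd f'_lt_al[of z] assms by (intro exI[of _ "f' z - \<alpha>"]) auto
qed (use assms cont_F in auto)
lemma F_inc: assumes "xp \<le> x" "x < y" shows "F x < F y"
proof (rule DERIV_pos_imp_increasing_open[of x y F])
  fix z assume "x < z" "z < y" then show "\<exists>d. DERIV F z :> d \<and> d > 0"
    using Fd f'_gt_al[of z] assms by (intro exI[of _ "f' z - \<alpha>"]) auto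
qed (use assms cont_F in auto)
lemma F_dec_le: "x \<le> y \<Longrightarrow> y \<le> xp \<Longrightarrow> F y \<le> F x"
  using F_dec[of x y] by (cases "x = y") auto
lemma F_inc_le: "xp \<le> x \<Longrightarrow> x \<le> y \<Longrightarrow> F x \<le> F y"
  using F_inc[of x y] by (cases "x = y") auto
lemma F_min: "F xp \<le> F x"
  using F_dec_le[of x xp] F_inc_le[of xp x] by (cases "x \<le> xp") auto

lemma dfm: "((\<lambda>s. f s - s) has_real_derivative (f' z - 1)) (at z)"
  using DERIV_diff[OF fd DERIV_ident] .
lemma dfp: "((\<lambda>s. f s + s) has_real_derivative (f' z + 1)) (at z)"
  using DERIV_add[OF fd DERIV_ident] .
lemma cfm: "continuous_on S (\<lambda>s. f s - s)"
  using dfm by (intro continuous_at_imp_continuous_on) (blast intro: DERIV_isCont)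
lemma cfp: "continuous_on S (\<lambda>s. f s + s)"
  using dfp by (intro continuous_at_imp_continuous_on) (blast intro: DERIV_isCont)

lemma fmx: assumes "x \<le> y" shows "f y - y \<le> f x - x"
proof -
  have "(\<lambda>s. f s - s) y \<le> (\<lambda>s. f s - s) x"
  proof (rule DERIV_nonpos_imp_nonincreasing[OF assms])
    fix z show "\<exists>d. ((\<lambda>s. f s - s) has_real_derivative d) (at z) \<and> d \<le> 0"
      using dfm[of z] f'_bounds[of z] by (intro exI[of _ "f' z - 1"]) auto
  qed
  then show ?thesis by simp
qed

lemma f_gt_id: assumes s: "s < a" shows "f s > s"
proof -
  have "(\<lambda>x. f x - x) s > (\<lambda>x. f x - x) a"
  proof (rule DERIV_neg_imp_decreasing_open[OF s])
    fix z assume "s < z" "z < a"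
    then show "\<exists>d. ((\<lambda>s. f s - s) has_real_derivative d) (at z) \<and> d < 0"
      using dfm[of z] f'_lt1[of z] by (intro exI[of _ "f' z - 1"]) auto
  qed (rule cfm)
  then show ?thesis using f_out[of a] a_pos by simp
qed

lemma f_gt_mid: assumes s: "-a < s" shows "f s > -s"
proof -
  have "(\<lambda>x. f x + x) (-a) < (\<lambda>x. f x + x) s"
  proof (rule DERIV_pos_imp_increasing_open[OF s])
    fix z assume "-a < z" "z < s"
    then show "\<exists>d. ((\<lambda>s. f s + s) has_real_derivative d) (at z) \<and> d > 0"
      using dfp[of z] f'_gtm1[of z] by (intro exI[of _ "f' z + 1"]) auto
  qed (rule cfp)
  then show ?thesis using f_out[of "-a"] a_pos by simp
qed

lemma f_ge_abs: "f s \<ge> \<bar>s\<bar>"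
  using f_gt_id[of s] f_gt_mid[of s] f_out[of s] by (cases "s < a"; cases "s > -a") auto

lemma F_pos: "F s > 0"
proof (cases "-a < s \<and> s < a")
  case True
  then have "f s > \<bar>s\<bar>" using f_gt_id[of s] f_gt_mid[of s] by auto
  moreover have "\<alpha> * s \<le> \<bar>s\<bar>"
  proof (cases "s \<ge> 0")
    case True then show ?thesis using al0 al1 mult_left_le_one_le[of s \<alpha>] by simp
  next
    case False then show ?thesis using al0 mult_nonneg_nonpos[of \<alpha> s] by simp
  qed
  ultimately show ?thesis by (simp add: Fa_def)
next
  case False
  then show ?thesis
  proof (cases "s \<ge> a")
    case True then show ?thesis using F_right[of s] a_pos al1 by simp
  next
    case False then have "s \<le> -a" using \<open>\<not> (-a < s \<and> s < a)\<close> by auto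
    then show ?thesis using F_left[of s] a_pos al0 by (smt (verit) mult_neg_neg)
  qed
qed

lemma F_lip: "u' \<le> u \<Longrightarrow> F u - F u' \<le> (1 - \<alpha>) * (u - u')"
  using fmx[of u' u] by (simp add: Fa_def algebra_simps)

lemma inv_cont:
  fixes H G :: "real \<Rightarrow> real"
  assumes "continuous_on {p..q} H" "p \<le> q" "\<And>x. x \<in> {p..q} \<Longrightarrow> G (H x) = x"
  shows "continuous_on {H p..H q} G"
proof -
  have "continuous_on (H ` {p..q}) G" by (rule continuous_on_inv) (use assms in auto)
  moreover have "{H p..H q} \<subseteq> H ` {p..q}"
  proof
    fix y assume "y \<in> {H p..H q}"
    then obtain x where "p \<le> x" "x \<le> q" "H x = y" using IVT'[of H p y q] assms by auto
    then show "y \<in> H ` {p..q}" by auto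
  qed
  ultimately show ?thesis by (rule continuous_on_subset)
qed

definition "Finv = Fa_inv a f \<alpha>"

lemma bigM: "F (a + \<bar>y\<bar> / (1 - \<alpha>)) \<ge> y" "a + \<bar>y\<bar> / (1 - \<alpha>) \<ge> a"
proof -
  show ge: "a + \<bar>y\<bar> / (1 - \<alpha>) \<ge> a" using al1 by simp
  have "F (a + \<bar>y\<bar> / (1 - \<alpha>)) = (1 - \<alpha>) * (a + \<bar>y\<bar> / (1 - \<alpha>))" using F_right[OF ge] .
  also have "\<dots> = (1 - \<alpha>) * a + \<bar>y\<bar>" using al1 by (simp add: field_simps)
  also have "\<dots> \<ge> y" using al1 a_pos by (smt (verit) abs_ge_self mult_pos_pos)
  finally show "F (a + \<bar>y\<bar> / (1 - \<alpha>)) \<ge> y" .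
qed

lemma FI_ex: assumes "y \<ge> F xp" shows "\<exists>!s. s \<ge> xp \<and> F s = y"
proof -
  define M where "M = a + \<bar>y\<bar> / (1 - \<alpha>)"
  have M: "F M \<ge> y" "M \<ge> xp" using bigM[of y] xp_int unfolding M_def by auto
  have "\<exists>s. xp \<le> s \<and> s \<le> M \<and> F s = y" by (rule IVT') (use assms M cont_F in auto)
  moreover have "s = s'" if "s \<ge> xp" "F s = y" "s' \<ge> xp" "F s' = y" for s s'
    using F_inc[of s s'] F_inc[of s' s] that by (cases s s' rule: linorder_cases) auto
  ultimately show ?thesis by blast
qed

lemma FI1: "y \<ge> F xp \<Longrightarrow> Finv y \<ge> xp \<and> F (Finv y) = y"
  unfolding Finv_def Fa_inv_def xp_def[symmetric] by (rule theI'[OF FI_ex])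

lemma FI2: "s \<ge> xp \<Longrightarrow> Finv (F s) = s"
  unfolding Finv_def Fa_inv_def xp_def[symmetric]
  by (rule the1_equality[OF FI_ex[OF F_min]]) auto

definition "ph = phi a f \<alpha>"

lemma ph_eq: "ph x = Finv (F x)" by (simp add: ph_def phi_def Finv_def)

lemma ph_prop: "ph x \<ge> xp" "F (ph x) = F x"
  using FI1[OF F_min[of x]] by (auto simp: ph_eq)

lemma ph_gt: "x < xp \<Longrightarrow> ph x > xp"
  using ph_prop[of x] F_dec[of x xp] by (cases "ph x = xp") auto

lemma ph_xp: "ph xp = xp" using FI2[of xp] by (simp add: ph_eq)

lemma ph_left: "x \<le> -a \<Longrightarrow> ph x = F x / (1 - \<alpha>)"
proof -
  assume x: "x \<le> -a"
  have Fx: "F x = -(1 + \<alpha>) * x" using F_left[OF x] .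
  have ge: "F x / (1 - \<alpha>) \<ge> a"
  proof -
    have "(1 + \<alpha>) * a \<le> (1 + \<alpha>) * (-x)" using x al0 by (intro mult_left_mono) auto
    then have "F x \<ge> (1 + \<alpha>) * a" using Fx by (simp add: algebra_simps)
    moreover have "(1 + \<alpha>) * a \<ge> (1 - \<alpha>) * a" using al0 a_pos by (intro mult_right_mono) auto
    ultimately have "(1 - \<alpha>) * a \<le> F x" by linarith
    then show ?thesis using al1 by (simp add: pos_le_divide_eq mult.commute)
  qed
  then have "F (F x / (1 - \<alpha>)) = F x" using F_right[of "F x / (1 - \<alpha>)"] al1 by simp
  then show ?thesis using FI2[of "F x / (1 - \<alpha>)"] ge xp_int by (simp add: ph_eq)
qed

definition "h x = x + delta a f \<alpha> x"

lemma h_eq: "h x = x + F x / (1 - \<alpha>) - ph x"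
  by (simp add: h_def delta_def ph_def)

lemma h_left: "x \<le> -a \<Longrightarrow> h x = x" using ph_left by (simp add: h_eq)

definition "sa = s_alpha a f \<alpha>"

lemma sa_eq: "sa = h xp" "sa = F xp / (1 - \<alpha>)"
  by (simp_all add: sa_def s_alpha_def h_def xp_def delta_def) (simp add: ph_xp[unfolded ph_def xp_def])

lemma sa_pos: "sa > 0" unfolding sa_eq(2) using F_pos[of xp] al1 by simp

lemma h_strict: assumes "x < x'" "x' \<le> xp" shows "h x < h x'"
proof -
  define u where "u = ph x"
  define u' where "u' = ph x'"
  have FF: "F x' < F x" using F_dec assms by auto
  have uu: "F u' = F x'" "F u = F x" "u \<ge> xp" "u' \<ge> xp" using ph_prop u_def u'_def by auto
  have "u' < u"
  proof (rule ccontr)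
    assume "\<not> u' < u" then have "F u \<le> F u'" using F_inc_le[of u u'] uu by auto
    then show False using FF uu by auto
  qed
  then have "F u - F u' \<le> (1 - \<alpha>) * (u - u')" using F_lip by auto
  then have "(F x - F x') / (1 - \<alpha>) \<le> u - u'" using uu al1 by (simp add: field_simps)
  then show ?thesis using assms unfolding h_eq u_def[symmetric] u'_def[symmetric]
    by (simp add: diff_divide_distrib)
qed

lemma h_mono: "x \<le> x' \<Longrightarrow> x' \<le> xp \<Longrightarrow> h x \<le> h x'"
  using h_strict[of x x'] by (cases "x = x'") auto

lemma Finv_cont: "xp \<le> M \<Longrightarrow> continuous_on {F xp..F M} Finv"
  by (rule inv_cont) (use cont_F FI2 in auto)

lemma ph_cont: "m \<le> xp \<Longrightarrow> continuous_on {m..xp} ph"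
proof -
  assume m: "m \<le> xp"
  define M where "M = a + \<bar>F m\<bar> / (1 - \<alpha>)"
  have M: "F M \<ge> F m" "M \<ge> xp" using bigM[of "F m"] xp_int unfolding M_def by auto
  have "continuous_on {m..xp} (\<lambda>x. Finv (F x))"
  proof (rule continuous_on_compose2[OF Finv_cont[OF M(2)] cont_F])
    show "F ` {m..xp} \<subseteq> {F xp..F M}"
    proof
      fix z assume "z \<in> F ` {m..xp}"
      then obtain x where x: "m \<le> x" "x \<le> xp" "z = F x" by auto
      have "F x \<le> F m" using F_dec_le[OF x(1,2)] .
      then show "z \<in> {F xp..F M}" using F_min[of x] M x(3) by auto
    qed
  qed
  then show ?thesis by (simp add: ph_eq[abs_def])
qed

lemma h_cont: "m \<le> xp \<Longrightarrow> continuous_on {m..xp} h"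
  unfolding h_eq[abs_def] using al1 by (intro continuous_intros ph_cont cont_F) auto

lemma tau_ex: assumes "y \<le> sa" shows "\<exists>!x. x \<le> xp \<and> h x = y"
proof -
  define m where "m = min y (-a)"
  have m: "m \<le> xp" "h m \<le> y" using xp_int h_left[of m] by (auto simp: m_def)
  have "\<exists>x. m \<le> x \<and> x \<le> xp \<and> h x = y"
    by (rule IVT') (use m assms sa_eq h_cont[OF m(1)] in auto)
  moreover have "x = x'" if "x \<le> xp" "h x = y" "x' \<le> xp" "h x' = y" for x x'
    using h_strict[of x x'] h_strict[of x' x] that by (cases x x' rule: linorder_cases) auto
  ultimately show ?thesis by blast
qed

definition "tu = tau a f \<alpha>"

lemma tau_eq: "tu y = (THE x. x \<le> xp \<and> h x = y)"
  by (simp add: tu_def tau_def h_def xp_def)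

lemma tau_prop: "y \<le> sa \<Longrightarrow> tu y \<le> xp \<and> h (tu y) = y"
  unfolding tau_eq by (rule theI'[OF tau_ex])

lemma tau_h: "x \<le> xp \<Longrightarrow> tu (h x) = x"
  unfolding tau_eq by (rule the1_equality[OF tau_ex]) (use h_mono sa_eq in auto)

lemma tau_left: "y \<le> -a \<Longrightarrow> tu y = y"
  using tau_h[of y] h_left[of y] xp_int by auto

lemma tau_xp: "tu sa = xp" using tau_h[of xp] sa_eq by simp

lemma tau_mono: assumes "y \<le> y'" "y' \<le> sa" shows "tu y \<le> tu y'"
proof (rule ccontr)
  assume "\<not> tu y \<le> tu y'"
  moreover have "y \<le> sa" using assms by linarith
  ultimately have "h (tu y') < h (tu y)" using h_strict[of "tu y'" "tu y"] tau_prop[of y] by auto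
  then show False using tau_prop[of y] tau_prop[of y'] assms \<open>y \<le> sa\<close> by auto
qed

lemma tau_strict: assumes "y < y'" "y' \<le> sa" shows "tu y < tu y'"
  using tau_mono[of y y'] tau_prop[of y] tau_prop[of y'] assms by (cases "tu y = tu y'") auto

lemma tau_cont: "continuous_on {-a..sa} tu"
  using inv_cont[OF h_cont[of "-a"], of tu] xp_int tau_h h_left[of "-a"] sa_eq by auto

definition "gS = shake_fun a \<alpha> f"

lemma g_low: "y \<le> sa \<Longrightarrow> gS y = \<alpha> * y + F (tu y)"
  by (simp add: gS_def shake_fun_def sa_def tu_def)
lemma g_high: "y > sa \<Longrightarrow> gS y = y"
  by (simp add: gS_def shake_fun_def sa_def)

lemma g_left: "y \<le> -a \<Longrightarrow> gS y = \<bar>y\<bar>"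
proof -
  assume y: "y \<le> -a"
  then have "y \<le> sa" using sa_pos a_pos by linarith
  then have "gS y = \<alpha> * y + F y" using g_low tau_left[OF y] by simp
  also have "\<dots> = f y" by (simp add: Fa_def)
  finally show ?thesis using f_out[of y] y a_pos by simp
qed

lemma g_right: "y \<ge> sa \<Longrightarrow> gS y = y"
proof -
  assume y: "y \<ge> sa"
  show ?thesis
  proof (cases "y = sa")
    case True
    then have "gS y = \<alpha> * sa + F xp" using g_low tau_xp by simp
    also have "\<dots> = sa" using sa_eq(2) al1 by (simp add: field_simps)
    finally show ?thesis using True by simp
  next
    case False then show ?thesis using y g_high by simp
  qed
qed

lemma sa_gt: "-a < sa" using sa_pos a_pos by linarith

lemma tau_mid: assumes "-a < y" "y < sa" shows "-a < tu y" "tu y < xp"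
  using tau_strict[of "-a" y] tau_strict[of y sa] tau_left[of "-a"] tau_xp assms by auto

lemma g_mid: assumes y: "-a < y" "y < sa" shows "gS y > \<bar>y\<bar>"
proof -
  define x where "x = tu y"
  have x: "-a < x" "x < xp" using tau_mid[OF y] x_def by auto
  have hy: "h x = y" using tau_prop[of y] y x_def by auto
  have gy: "gS y = \<alpha> * y + F x" using g_low[of y] y x_def by simp
  have phx: "ph x > x" using ph_gt[OF x(2)] x by simp
  have "y < F x / (1 - \<alpha>)" using hy phx by (simp add: h_eq)
  then have "(1 - \<alpha>) * y < F x" using al1 by (simp add: pos_less_divide_eq mult.commute)
  then have g1: "gS y > y" using gy by (simp add: algebra_simps)
  have "F (ph x) \<ge> (1 - \<alpha>) * ph x" using f_ge_abs[of "ph x"] by (simp add: Fa_def algebra_simps)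
  then have "F x / (1 - \<alpha>) \<ge> ph x" using ph_prop(2)[of x] al1 by (simp add: pos_le_divide_eq mult.commute)
  then have yx: "y \<ge> x" using hy by (simp add: h_eq)
  have "f x + x > 0" using f_gt_mid[OF x(1)] by simp
  then have "F x + (1 + \<alpha>) * x > 0" by (simp add: Fa_def algebra_simps)
  moreover have "(1 + \<alpha>) * y \<ge> (1 + \<alpha>) * x" using yx al0 by (intro mult_left_mono) auto
  ultimately have "gS y > -y" using gy by (simp add: algebra_simps)
  then show ?thesis using g1 by simp
qed

lemma g_ge: "gS y \<ge> \<bar>y\<bar>"
  using g_left[of y] g_right[of y] g_mid[of y] sa_pos by (cases "y \<le> -a"; cases "y \<ge> sa") auto

lemma g_neq: "gS y \<noteq> \<bar>y\<bar> \<longleftrightarrow> y \<in> {-a<..<sa}"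
  using g_left[of y] g_right[of y] g_mid[of y] sa_pos by (cases "y \<le> -a"; cases "y \<ge> sa") auto

lemma g_cont: "continuous_on UNIV gS"
proof -
  have c1: "continuous_on {..-a} gS"
    by (rule continuous_on_cong[THEN iffD2, OF refl _ continuous_on_id[THEN continuous_on_minus]])
       (use g_left a_pos in auto)
  have c2: "continuous_on {-a..sa} gS"
  proof (rule continuous_on_cong[THEN iffD2, OF refl])
    show "continuous_on {-a..sa} (\<lambda>y. \<alpha> * y + F (tu y))"
      by (intro continuous_intros continuous_on_compose2[OF cont_F tau_cont]) auto
  qed (use g_low in auto)
  have c3: "continuous_on {sa..} gS"
    by (rule continuous_on_cong[THEN iffD2, OF refl _ continuous_on_id]) (use g_right in auto)
  have "continuous_on ({..-a} \<union> {-a..sa}) gS" by (rule continuous_on_closed_Un[OF _ _ c1 c2]) auto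
  then have "continuous_on ({..-a} \<union> {-a..sa} \<union> {sa..}) gS" by (intro continuous_on_closed_Un c1 c2 c3) auto
  moreover have "{..-a} \<union> {-a..sa} \<union> {sa..} = UNIV" using sa_gt by auto
  ultimately show ?thesis by simp
qed

lemma g_P: "gS \<in> class_P"
  unfolding class_P_def
proof (intro CollectI conjI)
  show "continuous_on UNIV gS" by (rule g_cont)
  show "\<forall>x. \<bar>x\<bar> \<le> gS x" using g_ge by auto
  show "\<exists>R. \<forall>x. R \<le> \<bar>x\<bar> \<longrightarrow> gS x = \<bar>x\<bar>"
  proof (intro exI[of _ "a + sa"] allI impI)
    fix x assume "a + sa \<le> \<bar>x\<bar>"
    then have "x \<notin> {-a<..<sa}" using sa_pos a_pos by (cases "x \<ge> 0") auto
    then show "gS x = \<bar>x\<bar>" using g_neq[of x] by blast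
  qed
  show "\<exists>x0. gS x0 \<noteq> \<bar>x0\<bar>" using g_neq[of 0] sa_pos a_pos by (intro exI[of _ 0]) auto
qed

lemma a_of_g: "a_of gS = -a" and b_of_g: "b_of gS = sa"
proof -
  have "{x. gS x \<noteq> \<bar>x\<bar>} = {-a<..<sa}" using g_neq by blast
  then show "a_of gS = -a" "b_of gS = sa" using sa_gt by (simp_all add: a_of_def b_of_def)
qed

lemma Finv_deriv: assumes w: "w > F xp" shows "(Finv has_real_derivative inverse (f' (Finv w) - \<alpha>)) (at w)"
proof -
  define M where "M = a + \<bar>w + 1\<bar> / (1 - \<alpha>)"
  have M: "F M \<ge> w + 1" "M \<ge> xp" using bigM[of "w + 1"] xp_int unfolding M_def by auto
  have c: "continuous_on {F xp..F M} Finv" using Finv_cont[OF M(2)] .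
  have ic: "isCont Finv w"
    by (rule continuous_on_interior[OF c]) (use w M in simp)
  have fw: "Finv w \<ge> xp" "F (Finv w) = w" using FI1[of w] w by auto
  have "Finv w \<noteq> xp" using fw w by auto
  then have gt: "Finv w > xp" using fw by simp
  show ?thesis
  proof (rule DERIV_inverse_function[where f=F and g=Finv and x=w and a="F xp" and b="w + 1"])
    show "(F has_real_derivative f' (Finv w) - \<alpha>) (at (Finv w))" by (rule Fd)
    show "f' (Finv w) - \<alpha> \<noteq> 0" using f'_gt_al[OF gt] by simp
    show "F (Finv y) = y" if "F xp < y" "y < w + 1" for y using FI1[of y] that by auto
  qed (use w ic in auto)
qed

definition "Dh x = 1 + (f' x - \<alpha>) / (1 - \<alpha>) - inverse (f' (ph x) - \<alpha>) * (f' x - \<alpha>)"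

lemma h_fun: "h = (\<lambda>z. z + F z / (1 - \<alpha>) - Finv (F z))"
  by (rule ext) (simp add: h_eq ph_eq)

lemma h_deriv: assumes x: "x < xp" shows "(h has_real_derivative Dh x) (at x)" "Dh x \<ge> 1"
proof -
  have Fx: "F x > F xp" using F_dec[OF x] by simp
  have d1: "((\<lambda>z. Finv (F z)) has_real_derivative inverse (f' (Finv (F x)) - \<alpha>) * (f' x - \<alpha>)) (at x)"
    by (rule DERIV_chain2[OF Finv_deriv[OF Fx] Fd])
  have d2: "((\<lambda>z. z + F z / (1 - \<alpha>)) has_real_derivative 1 + (f' x - \<alpha>) / (1 - \<alpha>)) (at x)"
    by (rule DERIV_add[OF DERIV_ident DERIV_cdivide[OF Fd]])
  show "(h has_real_derivative Dh x) (at x)"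
    unfolding h_fun Dh_def ph_eq using DERIV_diff[OF d2 d1] by simp
  define A where "A = f' x - \<alpha>"
  define B where "B = f' (ph x) - \<alpha>"
  have A: "A < 0" using f'_lt_al[OF x] A_def by simp
  have B: "0 < B" "B \<le> 1 - \<alpha>" using f'_gt_al[OF ph_gt[OF x]] f'_bounds[of "ph x"] B_def by auto
  have "A / B \<le> A / (1 - \<alpha>)"
    by (rule divide_left_mono_neg) (use A B al1 in auto)
  then show "Dh x \<ge> 1" unfolding Dh_def A_def[symmetric] B_def[symmetric]
    by (simp add: divide_inverse mult.commute)
qed

lemma g_deriv: assumes X: "-a < X" "X < sa" shows "\<exists>d. (gS has_real_derivative d) (at X) \<and> d < \<alpha>"
proof -
  define x where "x = tu X"
  have x: "-a < x" "x < xp" using tau_mid[OF X] x_def by auto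
  have ic: "isCont tu X" by (rule continuous_on_interior[OF tau_cont]) (use X in simp)
  have D: "(h has_real_derivative Dh x) (at x)" "Dh x \<ge> 1" using h_deriv[OF x(2)] by auto
  have tuD: "(tu has_real_derivative inverse (Dh x)) (at X)"
  proof (rule DERIV_inverse_function[where f=h and g=tu and x=X and a="-a" and b=sa])
    show "(h has_real_derivative Dh x) (at (tu X))" using D x_def by simp
    show "Dh x \<noteq> 0" using D by simp
    show "h (tu y) = y" if "-a < y" "y < sa" for y using tau_prop[of y] that by auto
  qed (use X ic in auto)
  have kD: "((\<lambda>y. \<alpha> * y + F (tu y)) has_real_derivative \<alpha> * 1 + (f' (tu X) - \<alpha>) * inverse (Dh x)) (at X)"
    by (rule DERIV_add[OF DERIV_cmult[OF DERIV_ident] DERIV_chain2[OF Fd tuD]])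
  have gD: "(gS has_real_derivative \<alpha> * 1 + (f' (tu X) - \<alpha>) * inverse (Dh x)) (at X)"
    by (rule has_field_derivative_transform_within_open[OF kD, of "{..<sa}"]) (use X g_low in auto)
  have "(f' x - \<alpha>) * inverse (Dh x) < 0"
    using f'_lt_al[OF x(2)] D(2) by (simp add: mult_neg_pos)
  then show ?thesis using gD x_def by (intro exI[of _ "\<alpha> * 1 + (f' (tu X) - \<alpha>) * inverse (Dh x)"]) auto
qed

lemma gr_eq: "gr gS = {(x, y). -a \<le> x \<and> x \<le> sa \<and> 0 \<le> y \<and> \<bar>x\<bar> \<le> y \<and> y \<le> gS x}"
  by (simp add: gr_def a_of_g b_of_g)

lemma C_anti: assumes "-a \<le> s" "s \<le> s'" "s' \<le> sa" shows "gS s' - \<alpha> * s' \<le> gS s - \<alpha> * s"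
proof -
  have "tu s \<le> tu s'" using tau_mono assms by auto
  moreover have "tu s' \<le> xp" using tau_prop assms by auto
  ultimately have "F (tu s') \<le> F (tu s)" by (rule F_dec_le)
  then show ?thesis using g_low[of s] g_low[of s'] assms by simp
qed

lemma C_ma: "gS (-a) - \<alpha> * (-a) = (1 + \<alpha>) * a"
  using g_left[of "-a"] a_pos by (simp add: algebra_simps)

lemma t0_iff: "-c / (1 + \<alpha>) \<le> s \<longleftrightarrow> -c \<le> (1 + \<alpha>) * s"
proof -
  have ap: "1 + \<alpha> > 0" using al0 by simp
  show ?thesis using pos_divide_le_eq[OF ap, of "-c" s] by (simp add: mult.commute)
qed

lemma t0_iff2: "s \<le> -c / (1 + \<alpha>) \<longleftrightarrow> (1 + \<alpha>) * s \<le> -c"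
proof -
  have ap: "1 + \<alpha> > 0" using al0 by simp
  show ?thesis using pos_le_divide_eq[OF ap, of s "-c"] by (simp add: mult.commute)
qed

lemma S_int:
  assumes ne: "{s. (s, \<alpha> * s + c) \<in> gr gS} \<noteq> {}"
  shows "\<exists>e. -c / (1 + \<alpha>) \<le> e \<and> {s. (s, \<alpha> * s + c) \<in> gr gS} = {-c / (1 + \<alpha>)..e}"
proof -
  define S where "S = {s. (s, \<alpha> * s + c) \<in> gr gS}"
  define t0 where "t0 = -c / (1 + \<alpha>)"
  have Seq: "S = {s. -a \<le> s \<and> s \<le> sa \<and> 0 \<le> \<alpha> * s + c \<and> \<bar>s\<bar> \<le> \<alpha> * s + c \<and> \<alpha> * s + c \<le> gS s}"
    unfolding S_def gr_eq by auto
  have cl: "closed S" unfolding Seq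
    by (intro closed_Collect_conj closed_Collect_le continuous_intros g_cont)
  have bdd: "bdd_above S" unfolding Seq by (rule bdd_aboveI[of _ sa]) auto
  define e where "e = Sup S"
  have eS: "e \<in> S" unfolding e_def using closed_contains_Sup[OF _ bdd cl] ne S_def by auto
  have ap: "1 + \<alpha> > 0" using al0 by simp
  have lo: "t0 \<le> s" if "s \<in> S" for s
  proof -
    have "-s \<le> \<alpha> * s + c" using that unfolding Seq by auto
    then have "-c \<le> (1 + \<alpha>) * s" by (simp add: algebra_simps)
    then show ?thesis unfolding t0_def using t0_iff by blast
  qed
  have e: "-a \<le> e" "e \<le> sa" "\<bar>e\<bar> \<le> \<alpha> * e + c" "\<alpha> * e + c \<le> gS e" using eS unfolding Seq by auto
  have "c \<le> gS e - \<alpha> * e" using e by simp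
  also have "\<dots> \<le> gS (-a) - \<alpha> * (-a)" by (rule C_anti) (use e in auto)
  finally have "c \<le> (1 + \<alpha>) * a" using C_ma by simp
  then have t0a: "-a \<le> t0" unfolding t0_def using t0_iff2[of "-a" c] by (simp add: algebra_simps)
  have "S = {t0..e}"
  proof (rule set_eqI, rule iffI)
    fix s assume "s \<in> S"
    then show "s \<in> {t0..e}" using lo cSup_upper[OF _ bdd] e_def by auto
  next
    fix s assume s: "s \<in> {t0..e}"
    have s1: "-a \<le> s" "s \<le> sa" using s t0a e by auto
    have "-c \<le> (1 + \<alpha>) * s" using s t0_iff[of c s] unfolding t0_def by auto
    then have s2: "-s \<le> \<alpha> * s + c" by (simp add: algebra_simps)
    have "(1 - \<alpha>) * s \<le> (1 - \<alpha>) * e" using s al1 by (intro mult_left_mono) auto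
    moreover have "(1 - \<alpha>) * e \<le> c" using e(3) by (simp add: algebra_simps)
    ultimately have s3: "s \<le> \<alpha> * s + c" by (simp add: algebra_simps)
    have "c \<le> gS e - \<alpha> * e" using e by simp
    also have "\<dots> \<le> gS s - \<alpha> * s" by (rule C_anti) (use s s1 e in auto)
    finally have s4: "\<alpha> * s + c \<le> gS s" by simp
    show "s \<in> S" unfolding Seq using s1 s2 s3 s4 by auto
  qed
  moreover have "t0 \<le> e" using lo eS by auto
  ultimately show ?thesis unfolding S_def t0_def by auto
qed

lemma seg_aux:
  fixes p v :: "'b::real_vector"
  shows "(1 - u) *\<^sub>R p + u *\<^sub>R (p + L *\<^sub>R v) = p + (u * L) *\<^sub>R v"
proof -
  have "(1 - u) *\<^sub>R p + u *\<^sub>R (p + L *\<^sub>R v) = ((1 - u) *\<^sub>R p + u *\<^sub>R p) + u *\<^sub>R (L *\<^sub>R v)"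
    by (simp only: scaleR_add_right add.assoc)
  also have "\<dots> = p + (u * L) *\<^sub>R v"
    by (simp only: scaleR_left_distrib[symmetric] scaleR_scaleR) simp
  finally show ?thesis .
qed

lemma seg_img:
  fixes p v :: "'b::real_vector"
  assumes L: "L \<ge> 0"
  shows "closed_segment p (p + L *\<^sub>R v) = (\<lambda>t. p + t *\<^sub>R v) ` {0..L}"
proof (rule set_eqI, rule iffI)
  fix z assume "z \<in> closed_segment p (p + L *\<^sub>R v)"
  then obtain u where u: "0 \<le> u" "u \<le> 1" "z = (1 - u) *\<^sub>R p + u *\<^sub>R (p + L *\<^sub>R v)"
    unfolding closed_segment_def mem_Collect_eq by blast
  have z: "z = p + (u * L) *\<^sub>R v" using u(3) seg_aux[of u p L v] by simp
  have "u * L \<le> L" using mult_left_le_one_le[of L u] u L by simp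
  moreover have "0 \<le> u * L" using u L by simp
  ultimately have "u * L \<in> {0..L}" by simp
  then show "z \<in> (\<lambda>t. p + t *\<^sub>R v) ` {0..L}" using z by (rule rev_image_eqI)
next
  fix z assume "z \<in> (\<lambda>t. p + t *\<^sub>R v) ` {0..L}"
  then obtain t where t: "0 \<le> t" "t \<le> L" "z = p + t *\<^sub>R v" by auto
  show "z \<in> closed_segment p (p + L *\<^sub>R v)"
  proof (cases "L = 0")
    case True
    then have "z = (1 - 0) *\<^sub>R p + 0 *\<^sub>R (p + L *\<^sub>R v)" using t by simp
    then show ?thesis unfolding closed_segment_def mem_Collect_eq by (intro exI[of _ "0::real"]) simp
  next
    case False
    define u where "u = t / L"
    have u: "0 \<le> u" "u \<le> 1" using t L False by (auto simp: u_def)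
    have "u * L = t" using False by (simp add: u_def)
    then have "z = (1 - u) *\<^sub>R p + u *\<^sub>R (p + L *\<^sub>R v)" using t(3) seg_aux[of u p L v] by simp
    then show ?thesis unfolding closed_segment_def mem_Collect_eq using u by blast
  qed
qed

definition "nn = norm (1::real, \<alpha>)"
lemma nn_pos: "nn > 0" by (simp add: nn_def prod_eq_iff)

lemma line_pt: "p + t *\<^sub>R v_dir \<alpha> = (fst p + t / nn, snd p + t * \<alpha> / nn)"
  by (simp add: v_dir_def nn_def prod_eq_iff)

lemma chord_eq:
  assumes p: "p \<in> lineD"
  shows "chord \<alpha> (gr gS) p = gr gS \<inter> {p + t *\<^sub>R v_dir \<alpha> | t. True}"
proof -
  obtain t0 where p0: "p = (t0, -t0)" using p unfolding lineD_def by auto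
  define c where "c = -(1 + \<alpha>) * t0"
  have ap: "1 + \<alpha> > 0" using al0 by simp
  have t0c: "t0 = -c / (1 + \<alpha>)" unfolding c_def using ap by (simp add: field_simps)
  define S where "S = {s. (s, \<alpha> * s + c) \<in> gr gS}"
  have key: "p + t *\<^sub>R v_dir \<alpha> \<in> gr gS \<longleftrightarrow> t0 + t / nn \<in> S" for t
  proof -
    have "p + t *\<^sub>R v_dir \<alpha> = (t0 + t / nn, \<alpha> * (t0 + t / nn) + c)"
      unfolding line_pt p0 c_def by (simp add: algebra_simps)
    then show ?thesis unfolding S_def by simp
  qed
  show ?thesis
  proof (cases "S = {}")
    case True
    then have "gr gS \<inter> {p + t *\<^sub>R v_dir \<alpha> | t. True} = {}" using key by auto
    then show ?thesis unfolding chord_def by simp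
  next
    case False
    then obtain e where e: "t0 \<le> e" "S = {t0..e}" using S_int[of c] unfolding S_def t0c by auto
    define L where "L = nn * (e - t0)"
    have L0: "L \<ge> 0" using e nn_pos by (simp add: L_def)
    have T: "{t. p + t *\<^sub>R v_dir \<alpha> \<in> gr gS} = {0..L}"
    proof (rule set_eqI)
      fix t
      have "t0 + t / nn \<in> {t0..e} \<longleftrightarrow> 0 \<le> t / nn \<and> t / nn \<le> e - t0" by auto
      also have "\<dots> \<longleftrightarrow> 0 \<le> t \<and> t \<le> L" using nn_pos
        by (simp add: L_def zero_le_divide_iff divide_le_eq mult.commute)
      finally show "t \<in> {t. p + t *\<^sub>R v_dir \<alpha> \<in> gr gS} \<longleftrightarrow> t \<in> {0..L}"
        using key e(2) by auto
    qed
    have ne: "gr gS \<inter> {p + t *\<^sub>R v_dir \<alpha> | t. True} \<noteq> {}"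
    proof -
      have "0 \<in> {t. p + t *\<^sub>R v_dir \<alpha> \<in> gr gS}" unfolding T using L0 by simp
      then have "p + 0 *\<^sub>R v_dir \<alpha> \<in> gr gS" by simp
      then show ?thesis by blast
    qed
    have "chord \<alpha> (gr gS) p = closed_segment p (p + L *\<^sub>R v_dir \<alpha>)"
      unfolding chord_def using ne T L0 by simp
    also have "\<dots> = (\<lambda>t. p + t *\<^sub>R v_dir \<alpha>) ` {0..L}" by (rule seg_img[OF L0])
    also have "\<dots> = gr gS \<inter> {p + t *\<^sub>R v_dir \<alpha> | t. True}" using T by blast
    finally show ?thesis .
  qed
qed

lemma shake_gr: "shake_set \<alpha> (gr gS) = gr gS"
proof
  show "shake_set \<alpha> (gr gS) \<subseteq> gr gS" unfolding shake_set_def using chord_eq by auto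
next
  show "gr gS \<subseteq> shake_set \<alpha> (gr gS)"
  proof
    fix z assume z: "z \<in> gr gS"
    obtain x y where xy: "z = (x, y)" by fastforce
    define t0 where "t0 = (\<alpha> * x - y) / (1 + \<alpha>)"
    define p where "p = (t0, -t0)"
    have ap: "1 + \<alpha> > 0" using al0 by simp
    have pD: "p \<in> lineD" unfolding p_def lineD_def by auto
    have "p + (nn * (x - t0)) *\<^sub>R v_dir \<alpha> = (t0 + (x - t0), -t0 + \<alpha> * (x - t0))"
      unfolding line_pt p_def using nn_pos by simp
    also have "\<dots> = z"
    proof -
      have "(1 + \<alpha>) * t0 = \<alpha> * x - y" unfolding t0_def using ap by simp
      then have "-t0 + \<alpha> * (x - t0) = y" by (simp add: algebra_simps)
      then show ?thesis unfolding xy by simp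
    qed
    finally have "z \<in> gr gS \<inter> {p + t *\<^sub>R v_dir \<alpha> | t. True}" using z by blast
    then show "z \<in> shake_set \<alpha> (gr gS)" unfolding shake_set_def using chord_eq[OF pD] pD by blast
  qed
qed

end

theorem proposition4p5:
  fixes a \<alpha> :: real and f :: "real \<Rightarrow> real"
  assumes "a > 0" and "0 \<le> \<alpha>" and "\<alpha> < 1" and "f \<in> class_C a"
  defines "g \<equiv> shake_fun a \<alpha> f"
  shows "g \<in> class_P
    \<and> (\<forall>x\<in>{a_of g<..<b_of g}. \<exists>d. (g has_real_derivative d) (at x) \<and> d < \<alpha>)
    \<and> shake_set \<alpha> (gr g) = gr g"
proof -
  interpret shk a \<alpha> f using assms(1-4) by unfold_locales
  have g_eq: "g = gS" unfolding assms(5) gS_def ..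
  show ?thesis unfolding g_eq using g_P g_deriv a_of_g b_of_g shake_gr by auto
qed

end
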